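(* Let $\beta>0$, $T\in(0,1)$, and let $\varphi:[0,T]\to\mathbb R$ be left-continuous with bounded variation and such that $\varphi(t)+1-t>0$ for every $t\in(0,T]$. Then $$\lim_{n\to\infty}\frac1{\beta'n^2}\log\mathbb E\exp\Big(\beta'n\sum_{k=1}^{\lfloor nT\rfloor}\varphi(k/n)\log\rho^{G,\beta}_{k,n}\Big)=\int_0^Tg^G(t,\varphi(t))\,dt,$$ where $g^G(t,\theta)=\mathcal J(1-t+\theta)-\mathcal J(1-t)-\mathcal J(1+\theta)$.
   Context: $\beta'=\beta/2$; $\rho^{G,\beta}_{1,n}:=1$, $\rho^{G,\beta}_{k,n}$ ($2\le k\le n$) independent, $\rho^{G,\beta}_{k,n}\sim\mathrm{Beta}(\beta'(n-k+1),\beta'(k-1))$. $\mathcal J(u)=u\log u-u+1$ ($u>0$), $\mathcal J(0)=1$. *)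

theory Defs
  imports "HOL-Probability.Probability"
begin

definition beta_density :: "real \<Rightarrow> real \<Rightarrow> real \<Rightarrow> real" where
  "beta_density a b x =
     (if 0 < x \<and> x < 1 then x powr (a - 1) * (1 - x) powr (b - 1) / Beta a b else 0)"

definition beta_measure :: "real \<Rightarrow> real \<Rightarrow> real measure" where
  "beta_measure a b = density lborel (\<lambda>x. ennreal (beta_density a b x))"

definition rhoG_space :: "real \<Rightarrow> nat \<Rightarrow> (nat \<Rightarrow> real) measure" where
  "rhoG_space \<beta> n = (\<Pi>\<^sub>M k\<in>{2..n}.
      beta_measure ((\<beta>/2) * real (n - k + 1)) ((\<beta>/2) * real (k - 1)))"

definition rhoG :: "nat \<Rightarrow> (nat \<Rightarrow> real) \<Rightarrow> real" where
  "rhoG k \<omega> = (if k = 1 then 1 else \<omega> k)"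

text \<open>J(u) = u log u - u + 1 for u > 0, J(0) = 1 (value for u < 0 is irrelevant; set to 1).\<close>
definition Jfun :: "real \<Rightarrow> real" where
  "Jfun u = (if u > 0 then u * ln u - u + 1 else 1)"

definition gG :: "real \<Rightarrow> real \<Rightarrow> real" where
  "gG t \<theta> = Jfun (1 - t + \<theta>) - Jfun (1 - t) - Jfun (1 + \<theta>)"

definition bounded_variation_on :: "(real \<Rightarrow> real) \<Rightarrow> real \<Rightarrow> real \<Rightarrow> bool" where
  "bounded_variation_on f a b \<longleftrightarrow>
     (\<exists>B. \<forall>(m::nat) (s::nat \<Rightarrow> real).
        a \<le> s 0 \<and> s m \<le> b \<and> (\<forall>i<m. s i \<le> s (Suc i)) \<longrightarrow>
        (\<Sum>i<m. \<bar>f (s (Suc i)) - f (s i)\<bar>) \<le> B)"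

end

theory Submission
  imports Defs "HOL-Real_Asymp.Real_Asymp"
begin


lemma Beta_pos: "a > 0 \<Longrightarrow> b > 0 \<Longrightarrow> Beta a b > (0::real)"
  by (simp add: Beta_def)

lemma beta_density_meas[measurable]: "beta_density a b \<in> borel_measurable borel"
  unfolding beta_density_def by measurable

lemma beta_moment:
  fixes a b c :: real
  assumes a: "a > 0" and b: "b > 0" and ac: "a + c > 0"
  shows "(\<integral>\<^sup>+x. ennreal (exp (c * ln x)) \<partial>beta_measure a b) = ennreal (Beta (a+c) b / Beta a b)"
proof -
  have B: "Beta a b > 0" using a b by (rule Beta_pos)
  have "(\<integral>\<^sup>+x. ennreal (exp (c * ln x)) \<partial>beta_measure a b)
      = (\<integral>\<^sup>+x. ennreal (beta_density a b x) * ennreal (exp (c * ln x)) \<partial>lborel)"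
    unfolding beta_measure_def by (subst nn_integral_density) auto
  also have "\<dots> = (\<integral>\<^sup>+x. ennreal (indicator {0..1} x * (x powr (a + c - 1) * (1 - x) powr (b - 1) / Beta a b)) \<partial>lborel)"
  proof (intro nn_integral_cong)
    fix x :: real
    show "ennreal (beta_density a b x) * ennreal (exp (c * ln x)) =
      ennreal (indicator {0..1} x * (x powr (a + c - 1) * (1 - x) powr (b - 1) / Beta a b))"
    proof (cases "0 < x \<and> x < 1")
      case True
      then have "x powr (a - 1) * exp (c * ln x) = x powr (a + c - 1)"
        by (simp add: powr_def exp_add[symmetric] algebra_simps)
      then show ?thesis using True B
        by (simp add: beta_density_def ennreal_mult'[symmetric] indicator_def field_simps)
    next
      case False
      then show ?thesis using a b
        by (auto simp: beta_density_def indicator_def)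
    qed
  qed
  also have "\<dots> = ennreal (Beta (a+c) b / Beta a b)"
    apply (rule nn_integral_has_integral_lebesgue)
    using B apply (auto intro!: divide_nonneg_pos)[1]
    apply (rule has_integral_divide)
    using has_integral_Beta_real[OF ac b] by simp
  finally show ?thesis .
qed

lemma beta_prob: assumes "a > 0" "b > 0" shows "prob_space (beta_measure a b)"
proof
  have "(\<integral>\<^sup>+x. ennreal (exp (0 * ln x)) \<partial>beta_measure a b) = ennreal (Beta (a+0) b / Beta a b)"
    using assms by (intro beta_moment) auto
  then show "emeasure (beta_measure a b) (space (beta_measure a b)) = 1"
    using Beta_pos[OF assms] by simp
qed
lemma expect_formula:
  fixes \<beta> :: real and n m :: nat and c :: "nat \<Rightarrow> real"
  assumes bp: "\<beta> > 0" and mn: "m < n"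
    and cpos: "\<And>k. k \<in> {2..m} \<Longrightarrow> (\<beta>/2) * real (n - k + 1) + c k > 0"
  shows "(\<integral>\<omega>. exp (\<Sum>k=2..m. c k * ln (\<omega> k)) \<partial>rhoG_space \<beta> n)
       = (\<Prod>k\<in>{2..m}. Beta ((\<beta>/2) * real (n - k + 1) + c k) ((\<beta>/2) * real (k - 1))
                     / Beta ((\<beta>/2) * real (n - k + 1)) ((\<beta>/2) * real (k - 1)))"
proof -
  define a where "a k = (\<beta>/2) * real (n - k + 1)" for k :: nat
  define b where "b k = (\<beta>/2) * real (k - 1)" for k :: nat
  define M' where "M' k = (if k \<in> {2..n} then beta_measure (a k) (b k) else count_space {undefined})" for k
  have apos: "a k > 0" if "k \<in> {2..n}" for k using that bp by (auto simp: a_def)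
  have bpos: "b k > 0" if "k \<in> {2..n}" for k using that bp by (auto simp: b_def)
  have PS: "prob_space (M' k)" for k
    using beta_prob[OF apos bpos] by (auto simp: M'_def intro!: prob_spaceI)
  then interpret product_prob_space M' by (simp add: product_prob_space_def product_prob_space_axioms_def product_sigma_finite_def prob_space_imp_sigma_finite)
  have sp: "rhoG_space \<beta> n = PiM {2..n} M'"
    unfolding rhoG_space_def by (rule PiM_cong) (auto simp: M'_def a_def b_def)
  define f where "f k x = (if k \<le> m then exp (c k * ln x) else 1)" for k :: nat and x :: real
  have eq: "exp (\<Sum>k=2..m. c k * ln (\<omega> k)) = (\<Prod>k\<in>{2..n}. f k (\<omega> k))" for \<omega> :: "nat \<Rightarrow> real"
  proof -
    have "exp (\<Sum>k=2..m. c k * ln (\<omega> k)) = (\<Prod>k\<in>{2..m}. f k (\<omega> k))"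
      by (simp add: exp_sum f_def)
    also have "\<dots> = (\<Prod>k\<in>{2..n}. f k (\<omega> k))"
      by (rule prod.mono_neutral_left) (use mn in \<open>auto simp: f_def\<close>)
    finally show ?thesis .
  qed
  have fm[measurable]: "f k \<in> borel_measurable borel" for k unfolding f_def by measurable
  have "(\<integral>\<omega>. exp (\<Sum>k=2..m. c k * ln (\<omega> k)) \<partial>rhoG_space \<beta> n)
      = (\<integral>\<omega>. (\<Prod>k\<in>{2..n}. f k (\<omega> k)) \<partial>PiM {2..n} M')"
    by (simp add: sp eq)
  also have "\<dots> = enn2real (\<integral>\<^sup>+\<omega>. ennreal (\<Prod>k\<in>{2..n}. f k (\<omega> k)) \<partial>PiM {2..n} M')"
  proof (rule integral_eq_nn_integral)
    have sM: "sets (M' k) = sets borel" if "k \<in> {2..n}" for k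
      using that by (simp add: M'_def beta_measure_def)
    have "(\<lambda>x. f k x) \<in> borel_measurable (M' k)" if "k \<in> {2..n}" for k
      using measurable_cong_sets[OF sM[OF that] refl] fm by blast
    then show "(\<lambda>\<omega>. \<Prod>k\<in>{2..n}. f k (\<omega> k)) \<in> borel_measurable (PiM {2..n} M')"
      by (intro borel_measurable_prod measurable_compose[OF measurable_component_singleton]) auto
  qed (auto simp: f_def intro!: prod_nonneg)
  also have "(\<integral>\<^sup>+\<omega>. ennreal (\<Prod>k\<in>{2..n}. f k (\<omega> k)) \<partial>PiM {2..n} M')
     = (\<integral>\<^sup>+\<omega>. (\<Prod>k\<in>{2..n}. ennreal (f k (\<omega> k))) \<partial>PiM {2..n} M')"
    by (intro nn_integral_cong prod_ennreal[symmetric]) (auto simp: f_def)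
  also have "\<dots> = (\<Prod>k\<in>{2..n}. \<integral>\<^sup>+x. ennreal (f k x) \<partial>M' k)"
  proof (rule product_nn_integral_prod)
    have sM: "sets (M' k) = sets borel" if "k \<in> {2..n}" for k
      using that by (simp add: M'_def beta_measure_def)
    show "(\<lambda>x. ennreal (f k x)) \<in> borel_measurable (M' k)" if "k \<in> {2..n}" for k
      using measurable_cong_sets[OF sM[OF that] refl] fm that
      by (intro measurable_compose[OF _ measurable_ennreal]) blast
  qed simp
  also have "\<dots> = (\<Prod>k\<in>{2..n}. ennreal (if k \<le> m then Beta (a k + c k) (b k) / Beta (a k) (b k) else 1))"
  proof (rule prod.cong[OF refl])
    fix k assume k: "k \<in> {2..n}"
    show "(\<integral>\<^sup>+x. ennreal (f k x) \<partial>M' k) = ennreal (if k \<le> m then Beta (a k + c k) (b k) / Beta (a k) (b k) else 1)"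
    proof (cases "k \<le> m")
      case True
      then show ?thesis using k apos[OF k] bpos[OF k] cpos[of k]
        by (simp add: f_def M'_def beta_moment a_def)
    next
      case False
      show ?thesis using False prob_space.emeasure_space_1[OF PS[of k]] by (simp add: f_def)
    qed
  qed
  also have "\<dots> = ennreal (\<Prod>k\<in>{2..n}. (if k \<le> m then Beta (a k + c k) (b k) / Beta (a k) (b k) else 1))"
  proof (intro prod_ennreal)
    fix k assume k: "k \<in> {2..n}"
    show "0 \<le> (if k \<le> m then Beta (a k + c k) (b k) / Beta (a k) (b k) else 1)"
    proof (cases "k \<le> m")
      case True
      have "a k + c k > 0" using cpos[of k] True k by (simp add: a_def)
      then show ?thesis using True k apos[OF k] bpos[OF k]
        by (simp add: Beta_pos less_imp_le)
    qed simp
  qed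
  also have "(\<Prod>k\<in>{2..n}. (if k \<le> m then Beta (a k + c k) (b k) / Beta (a k) (b k) else 1))
     = (\<Prod>k\<in>{2..m}. Beta (a k + c k) (b k) / Beta (a k) (b k))"
    by (rule prod.mono_neutral_cong_right) (use mn in auto)
  finally have X: "(\<integral>\<omega>. exp (\<Sum>k=2..m. c k * ln (\<omega> k)) \<partial>rhoG_space \<beta> n) =
     enn2real (ennreal (\<Prod>k\<in>{2..m}. Beta (a k + c k) (b k) / Beta (a k) (b k)))" .
  have "0 \<le> (\<Prod>k\<in>{2..m}. Beta (a k + c k) (b k) / Beta (a k) (b k))"
  proof (intro prod_nonneg)
    fix k assume k: "k \<in> {2..m}"
    then have k': "k \<in> {2..n}" using mn by auto
    have "a k + c k > 0" using cpos[of k] k by (simp add: a_def)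
    then show "0 \<le> Beta (a k + c k) (b k) / Beta (a k) (b k)" using apos[OF k'] bpos[OF k']
      by (simp add: Beta_pos less_imp_le)
  qed
  with X show ?thesis by (simp add: a_def b_def)
qed



definition Ff :: "real \<Rightarrow> real" where "Ff x = x * ln x - x"
definition Eg :: "real \<Rightarrow> real" where "Eg x = ln (Gamma x) - Ff x"

lemma Ff_diff_bounds:
  assumes x: "x > 0"
  shows "ln x \<le> Ff (x+1) - Ff x" "Ff (x+1) - Ff x \<le> ln (x+1)"
proof -
  have l1: "ln (x/(x+1)) \<le> x/(x+1) - 1" using x by (intro ln_le_minus_one) auto
  have l2: "ln ((x+1)/x) \<le> (x+1)/x - 1" using x by (intro ln_le_minus_one) auto
  have e1: "ln (x/(x+1)) = ln x - ln (x+1)" using x by (simp add: ln_div)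
  have e2: "ln ((x+1)/x) = ln (x+1) - ln x" using x by (simp add: ln_div)
  have "x/(x+1) - 1 = -1/(x+1)" using x by (simp add: field_simps)
  with l1 e1 have a: "ln (x+1) - ln x \<ge> 1/(x+1)" by simp
  have "(x+1) * (ln (x+1) - ln x) \<ge> (x+1) * (1/(x+1))"
    using a x by (intro mult_left_mono) auto
  then have "(x+1) * (ln (x+1) - ln x) \<ge> 1" using x by simp
  then show "ln x \<le> Ff (x+1) - Ff x" by (simp add: Ff_def algebra_simps)
  have "(x+1)/x - 1 = 1/x" using x by (simp add: field_simps)
  with l2 e2 have b: "ln (x+1) - ln x \<le> 1/x" by simp
  have "x * (ln (x+1) - ln x) \<le> x * (1/x)"
    using b x by (intro mult_left_mono) auto
  then have "x * (ln (x+1) - ln x) \<le> 1" using x by simp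
  then show "Ff (x+1) - Ff x \<le> ln (x+1)" by (simp add: Ff_def algebra_simps)
qed

lemma Eg_step:
  assumes x: "x > 0"
  shows "Eg (x+1) \<le> Eg x" "Eg (x+1) \<ge> Eg x - (ln (x+1) - ln x)"
proof -
  have "x \<notin> \<int>\<^sub>\<le>\<^sub>0" using x by (auto elim!: nonpos_Ints_cases)
  then have "Gamma (x+1) = x * Gamma x" by (rule Gamma_plus1)
  moreover have "ln (x * Gamma x) = ln x + ln (Gamma x)" using x Gamma_real_pos[OF x] by (simp add: ln_mult_pos)
  ultimately have g: "ln (Gamma (x+1)) = ln x + ln (Gamma x)" by simp
  show "Eg (x+1) \<le> Eg x" using Ff_diff_bounds(1)[OF x] g by (simp add: Eg_def)
  show "Eg (x+1) \<ge> Eg x - (ln (x+1) - ln x)" using Ff_diff_bounds(2)[OF x] g by (simp add: Eg_def)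
qed

lemma Eg_steps:
  assumes y: "y > 0"
  shows "Eg (y + real N) \<le> Eg y \<and> Eg (y + real N) \<ge> Eg y - (ln (y + real N) - ln y)"
proof (induction N)
  case 0 then show ?case by simp
next
  case (Suc N)
  have p: "y + real N > 0" using y by simp
  have e: "y + real (Suc N) = (y + real N) + 1" by simp
  show ?case using Eg_step[OF p] Suc unfolding e by linarith
qed

lemma Eg_cont: "continuous_on {a..b} Eg" if "a > 0" for a b :: real
proof -
  have "continuous_on {a..b} Gamma"
    using that by (intro continuous_on_Gamma) (auto elim!: nonpos_Ints_cases)
  moreover have "\<forall>x\<in>{a..b}. Gamma x > 0" using that by auto
  ultimately have "continuous_on {a..b} (\<lambda>x. ln (Gamma x))"
    by (intro continuous_on_ln) auto
  moreover have "continuous_on {a..b} Ff"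
    unfolding Ff_def using that by (intro continuous_intros) auto
  ultimately show ?thesis unfolding Eg_def[abs_def] by (rule continuous_on_diff)
qed

lemma Eg_bounded_on: assumes "a > 0" shows "\<exists>K. \<forall>x\<in>{a..b}. \<bar>Eg x\<bar> \<le> K"
proof -
  have "compact (Eg ` {a..b})" by (intro compact_continuous_image Eg_cont assms compact_Icc)
  then have "bounded (Eg ` {a..b})" by (rule compact_imp_bounded)
  then show ?thesis unfolding bounded_iff by auto
qed

lemma Eg_bound:
  assumes c: "c > 0"
  shows "\<exists>K. \<forall>x\<ge>c. \<bar>Eg x\<bar> \<le> K + \<bar>ln x\<bar>"
proof -
  obtain K1 where K1: "\<forall>x\<in>{min c 1..2}. \<bar>Eg x\<bar> \<le> K1" using Eg_bounded_on[of "min c 1" 2] c by auto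
  have "\<bar>Eg x\<bar> \<le> K1 + \<bar>ln x\<bar>" if x: "x \<ge> c" for x
  proof (cases "x \<le> 2")
    case True
    then have "x \<in> {min c 1..2}" using x by auto
    then show ?thesis using K1 by (smt (verit))
  next
    case False
    define N where "N = nat \<lfloor>x\<rfloor> - 1"
    define y where "y = x - real N"
    have fl: "real_of_int \<lfloor>x\<rfloor> \<le> x" "x < real_of_int \<lfloor>x\<rfloor> + 1" by linarith+
    have "\<lfloor>x\<rfloor> \<ge> 2" using False by linarith
    then have n1: "nat \<lfloor>x\<rfloor> \<ge> 1" by linarith
    have "real N = real (nat \<lfloor>x\<rfloor>) - 1" unfolding N_def using n1 by (simp add: of_nat_diff)
    then have rN: "real N = real_of_int \<lfloor>x\<rfloor> - 1" using \<open>\<lfloor>x\<rfloor> \<ge> 2\<close> by simp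
    have y12: "1 \<le> y" "y \<le> 2" using fl rN unfolding y_def by linarith+
    have xy: "x = y + real N" by (simp add: y_def)
    have yK: "\<bar>Eg y\<bar> \<le> K1" using K1 y12 by auto
    have s: "Eg x \<le> Eg y" "Eg x \<ge> Eg y - (ln x - ln y)"
      using Eg_steps[of y N] y12 unfolding xy[symmetric] by auto
    have "ln y \<ge> 0" using y12 by simp
    moreover have "ln x \<ge> 0" using False by simp
    ultimately show ?thesis using s yK by linarith
  qed
  then show ?thesis by blast
qed

lemma Jfun_cont: "isCont Jfun u"
proof -
  consider "u > 0" | "u < 0" | "u = 0" by linarith
  then show ?thesis
  proof cases
    case 1
    have "eventually (\<lambda>v. Jfun v = v * ln v - v + 1) (nhds u)"
      using eventually_nhds_in_open[of "{0<..}" u] 1 by (auto elim!: eventually_mono simp: Jfun_def)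
    moreover have "isCont (\<lambda>v. v * ln v - v + 1) u" using 1 by (intro continuous_intros) auto
    ultimately show ?thesis by (subst isCont_cong) auto
  next
    case 2
    have "eventually (\<lambda>v. Jfun v = 1) (nhds u)"
      using eventually_nhds_in_open[of "{..<0}" u] 2 by (auto elim!: eventually_mono simp: Jfun_def)
    then show ?thesis using isCont_cong[of Jfun "\<lambda>_. 1" u] by auto
  next
    case 3
    have r: "((\<lambda>v::real. v * ln v - v + 1) \<longlongrightarrow> 1) (at_right 0)" by real_asymp
    have "(Jfun \<longlongrightarrow> 1) (at_right 0)"
      by (rule Lim_transform_eventually[OF r]) (auto simp: Jfun_def eventually_at_right_less intro: eventually_mono[OF eventually_at_right_less])
    moreover have "(Jfun \<longlongrightarrow> 1) (at_left 0)"
      by (rule Lim_transform_eventually[OF tendsto_const]) (auto simp: Jfun_def intro: eventually_mono[OF eventually_at_left_real[of "-1" 0]])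
    ultimately have "(Jfun \<longlongrightarrow> 1) (at 0)" by (simp add: filterlim_at_split)
    then show ?thesis using 3 by (simp add: isCont_def Jfun_def)
  qed
qed




lemma Ff_scale: "l > 0 \<Longrightarrow> w > 0 \<Longrightarrow> Ff (l * w) = l * w * ln l + l * Ff w"
  by (simp add: Ff_def ln_mult_pos algebra_simps)

lemma Jfun_Ff: "u > 0 \<Longrightarrow> Jfun u = Ff u + 1"
  by (simp add: Jfun_def Ff_def)

lemma ln_bound_aux:
  fixes b M A :: real and n :: nat
  assumes b: "b > 0" and M: "M \<ge> 0" and n: "n \<ge> 1" and A: "b \<le> A" "A \<le> b * real n * (2 + M)"
  shows "\<bar>ln A\<bar> \<le> \<bar>ln b\<bar> + \<bar>ln (2 + M)\<bar> + ln (real n)"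
proof -
  have Ap: "A > 0" using A b by linarith
  have "ln A \<ge> ln b" using A b by simp
  moreover have "ln A \<le> ln (b * real n * (2 + M))" using A Ap by simp
  moreover have "ln (b * real n * (2 + M)) = ln b + ln (real n) + ln (2 + M)"
    using b n M by (simp add: ln_mult_pos)
  moreover have "ln (real n) \<ge> 0" using n by simp
  ultimately show ?thesis by linarith
qed

lemma term_est:
  fixes \<beta> M \<epsilon> :: real
  assumes bp: "\<beta> > 0" and M: "M \<ge> 0" and ep: "\<epsilon> > 0"
  shows "\<exists>N. \<forall>n\<ge>N. \<forall>k \<theta>. 2 \<le> k \<longrightarrow> k < n \<longrightarrow> \<bar>\<theta>\<bar> \<le> M \<longrightarrow> 1 - real k / real n + \<theta> > 0 \<longrightarrow>
     \<bar>ln (Beta ((\<beta>/2) * real (n - k + 1) + (\<beta>/2) * real n * \<theta>) ((\<beta>/2) * real (k - 1))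
          / Beta ((\<beta>/2) * real (n - k + 1)) ((\<beta>/2) * real (k - 1))) / ((\<beta>/2) * real n)
       - gG (real k / real n) \<theta>\<bar> \<le> \<epsilon>"
proof -
  define b' where "b' = \<beta>/2"
  have b'p: "b' > 0" using bp by (simp add: b'_def)
  obtain K where K: "\<forall>x\<ge>b'. \<bar>Eg x\<bar> \<le> K + \<bar>ln x\<bar>" using Eg_bound[OF b'p] by blast
  define L where "L = \<bar>ln b'\<bar> + \<bar>ln (2 + M)\<bar>"
  have "uniformly_continuous_on {0..3+M} Jfun"
    by (intro compact_uniformly_continuous continuous_at_imp_continuous_on) (auto intro: Jfun_cont)
  then obtain \<delta> where dp: "\<delta> > 0" and
    dJ: "\<And>x x'. x \<in> {0..3+M} \<Longrightarrow> x' \<in> {0..3+M} \<Longrightarrow> dist x' x < \<delta> \<Longrightarrow> dist (Jfun x') (Jfun x) < \<epsilon>/4"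
    unfolding uniformly_continuous_on_def using ep by (metis divide_pos_pos zero_less_numeral)
  have lim: "(\<lambda>n::nat. 4 * (K + L + ln (real n)) / (b' * real n)) \<longlonglongrightarrow> 0"
    using b'p by real_asymp
  have ev1: "eventually (\<lambda>n::nat. 4 * (K + L + ln (real n)) / (b' * real n) < \<epsilon>/2) sequentially"
    by (rule order_tendstoD(2)[OF lim]) (use ep in simp)
  have lim2: "(\<lambda>n::nat. 1 / real n) \<longlonglongrightarrow> 0" by real_asymp
  have ev2: "eventually (\<lambda>n::nat. 1 / real n < \<delta>) sequentially"
    by (rule order_tendstoD(2)[OF lim2]) (use dp in simp)
  obtain N where N: "\<And>n. n \<ge> N \<Longrightarrow> 4 * (K + L + ln (real n)) / (b' * real n) < \<epsilon>/2 \<and> 1 / real n < \<delta>"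
    using eventually_conj[OF ev1 ev2] unfolding eventually_sequentially by blast
  show ?thesis
  proof (intro exI[of _ "max N 1"] allI impI)
    fix n k :: nat and \<theta> :: real
    assume n: "max N 1 \<le> n" and k2: "2 \<le> k" and kn: "k < n" and th: "\<bar>\<theta>\<bar> \<le> M"
      and pos: "1 - real k / real n + \<theta> > 0"
    have n1: "n \<ge> 1" and nN: "n \<ge> N" using n by auto
    have np: "real n > 0" using n1 by simp
    define l where "l = b' * real n"
    have lp: "l > 0" using b'p np by (simp add: l_def)
    define t where "t = real k / real n"
    define v1 where "v1 = 1 - t + \<theta>"
    define v3 where "v3 = 1 - t"
    define w1 where "w1 = v1 + 1 / real n"
    define w2 where "w2 = 1 + \<theta>"
    define w3 where "w3 = v3 + 1 / real n"
    have tk: "t * real n = real k" using np by (simp add: t_def)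
    have t01: "t > 0" "t < 1" using k2 kn np by (auto simp: t_def field_simps)
    have t2: "t \<ge> 2 / real n" using k2 np by (simp add: t_def divide_right_mono)
    have v1p: "v1 > 0" using pos by (simp add: v1_def t_def)
    have v3p: "v3 > 0" using t01 by (simp add: v3_def)
    have invp: "1 / real n > 0" using np by simp
    have w1p: "w1 > 0" unfolding w1_def using v1p invp by linarith
    have w2p: "w2 > t" using v1p by (simp add: v1_def w2_def)
    have w3p: "w3 > 0" unfolding w3_def using v3p invp by linarith
    have inv1: "1 / real n \<le> 1" using n1 by simp
    define A1 where "A1 = b' * real (n - k + 1) + b' * real n * \<theta>"
    define B where "B = b' * real (k - 1)"
    define A3 where "A3 = b' * real (n - k + 1)"
    have rnk: "real (n - k + 1) = real n - real k + 1" using kn by (simp add: of_nat_diff)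
    have A1e: "A1 = l * w1" unfolding A1_def l_def w1_def v1_def t_def rnk using np
      by (simp add: field_simps)
    have A3e: "A3 = l * w3" unfolding A3_def l_def w3_def v3_def t_def rnk using np
      by (simp add: field_simps)
    have rk1: "real (k - 1) = real k - 1" using k2 by (simp add: of_nat_diff)
    have A2e: "A1 + B = l * w2" unfolding A1_def B_def l_def w2_def rnk rk1 using np
      by (simp add: field_simps)
    have A4e: "A3 + B = l" unfolding A3_def B_def l_def rnk rk1 using np
      by (simp add: field_simps)
    have A1p: "A1 > 0" and A3p: "A3 > 0" and Bp: "B > 0" and A2p: "A1 + B > 0"
      using A1e A3e A4e A2e lp w1p w3p w2p t01 k2 b'p by (auto simp: B_def)
    have gA: "Gamma x > 0" if "x > 0" for x :: real using that by simp
    have lnq: "ln (Beta A1 B / Beta A3 B) = ln (Gamma A1) - ln (Gamma (A1 + B)) - ln (Gamma A3) + ln (Gamma (A3 + B))"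
      using gA[OF A1p] gA[OF A3p] gA[OF Bp] gA[OF A2p] gA[OF A4e[symmetric, THEN subst[where P="\<lambda>x. x > 0"], OF lp]]
      by (simp add: Beta_def ln_div ln_mult_pos)
    define Es where "Es = Eg A1 - Eg (A1 + B) - Eg A3 + Eg (A3 + B)"
    have lnq2: "ln (Beta A1 B / Beta A3 B) = Ff A1 - Ff (A1 + B) - Ff A3 + Ff (A3 + B) + Es"
      unfolding lnq Es_def Eg_def by simp
    have Fs: "Ff A1 - Ff (A1 + B) - Ff A3 + Ff (A3 + B) = l * (Ff w1 - Ff w2 - Ff w3 + Ff 1)
       + l * ln l * (w1 - w2 - w3 + 1)"
    proof -
      have w2pp: "w2 > 0" using w2p t01 by linarith
      have f1: "Ff A1 = l*w1*ln l + l*Ff w1" using Ff_scale[OF lp w1p] A1e by simp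
      have f2: "Ff (A1+B) = l*w2*ln l + l*Ff w2" using Ff_scale[OF lp w2pp] A2e by simp
      have f3: "Ff A3 = l*w3*ln l + l*Ff w3" using Ff_scale[OF lp w3p] A3e by simp
      have f4: "Ff (A3+B) = l*1*ln l + l*Ff 1" using Ff_scale[OF lp, of 1] A4e by simp
      show ?thesis by (simp add: f1 f2 f3 f4 algebra_simps)
    qed
    have wz: "w1 - w2 - w3 + 1 = 0" by (simp add: w1_def w2_def w3_def v1_def v3_def)
    have main: "ln (Beta A1 B / Beta A3 B) / l = (Ff w1 - Ff w2 - Ff w3 + Ff 1) + Es / l"
    proof -
      have "ln (Beta A1 B / Beta A3 B) = l * (Ff w1 - Ff w2 - Ff w3 + Ff 1) + l * ln l * (w1 - w2 - w3 + 1) + Es"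
        using lnq2 Fs by linarith
      then have "ln (Beta A1 B / Beta A3 B) = l * (Ff w1 - Ff w2 - Ff w3 + Ff 1) + Es" using wz by simp
      then show ?thesis using lp by (simp add: divide_simps)
    qed
    have gG_eq: "gG t \<theta> = Ff v1 - Ff v3 - Ff w2 + Ff 1"
      unfolding gG_def using Jfun_Ff[OF v1p] Jfun_Ff[OF v3p] Jfun_Ff[of "1 + \<theta>"] w2p t01
      by (simp add: v1_def v3_def w2_def Ff_def)
    have th2: "-M \<le> \<theta>" "\<theta> \<le> M" using th by auto
    have d1: "\<bar>Ff w1 - Ff v1\<bar> < \<epsilon>/4"
    proof -
      have "dist (Jfun w1) (Jfun v1) < \<epsilon>/4"
        using N[OF nN] inv1 v1p w1p th2 t01 by (intro dJ) (auto simp: w1_def v1_def dist_real_def)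
      then show ?thesis using Jfun_Ff[OF v1p] Jfun_Ff[OF w1p] by (simp add: dist_real_def)
    qed
    have d3: "\<bar>Ff w3 - Ff v3\<bar> < \<epsilon>/4"
    proof -
      have "dist (Jfun w3) (Jfun v3) < \<epsilon>/4"
        using N[OF nN] inv1 v3p w3p th2 t01 M by (intro dJ) (auto simp: w3_def v3_def dist_real_def)
      then show ?thesis using Jfun_Ff[OF v3p] Jfun_Ff[OF w3p] by (simp add: dist_real_def)
    qed
    have EA: "\<bar>Eg A\<bar> \<le> K + L + ln (real n)" if "b' \<le> A" "A \<le> b' * real n * (2 + M)" for A
      using K that ln_bound_aux[OF b'p M n1 that] unfolding L_def by force
    have lw: "l * w \<le> b' * real n * (2 + M)" if "w \<le> 2 + M" "w \<ge> 0" for w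
      unfolding l_def using that b'p np by (intro mult_left_mono) auto
    have lge: "l * w \<ge> b'" if "w \<ge> 1 / real n" for w
    proof -
      have "l * w \<ge> l * (1 / real n)" using that lp by (intro mult_left_mono) auto
      then show ?thesis using np by (simp add: l_def)
    qed
    have E1: "\<bar>Eg A1\<bar> \<le> K + L + ln (real n)" unfolding A1e
      using th2 t01 v1p inv1 by (intro EA lge lw) (auto simp: w1_def v1_def)
    have E2: "\<bar>Eg (A1 + B)\<bar> \<le> K + L + ln (real n)" unfolding A2e
      using th2 t01 w2p t2 np by (intro EA lge lw) (auto simp: w2_def)
    have E3: "\<bar>Eg A3\<bar> \<le> K + L + ln (real n)" unfolding A3e
      using th2 t01 v3p inv1 by (intro EA lge lw) (auto simp: w3_def v3_def)
    have E4: "\<bar>Eg (A3 + B)\<bar> \<le> K + L + ln (real n)" unfolding A4e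
      using EA[of l] lge[of 1] lw[of 1] inv1 M by auto
    have "\<bar>Es\<bar> \<le> 4 * (K + L + ln (real n))" using E1 E2 E3 E4 unfolding Es_def by (smt (verit))
    then have "\<bar>Es / l\<bar> \<le> 4 * (K + L + ln (real n)) / l" using lp by (simp add: divide_right_mono)
    moreover have "4 * (K + L + ln (real n)) / l < \<epsilon>/2" using N[OF nN] by (simp add: l_def)
    ultimately have dE: "\<bar>Es / l\<bar> < \<epsilon>/2" by linarith
    have "ln (Beta A1 B / Beta A3 B) / l - gG t \<theta> = (Ff w1 - Ff v1) - (Ff w3 - Ff v3) + Es / l"
      using main gG_eq by simp
    then have "\<bar>ln (Beta A1 B / Beta A3 B) / l - gG t \<theta>\<bar> \<le> \<epsilon>"
      using d1 d3 dE by linarith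
    then show "\<bar>ln (Beta ((\<beta>/2) * real (n - k + 1) + (\<beta>/2) * real n * \<theta>) ((\<beta>/2) * real (k - 1))
          / Beta ((\<beta>/2) * real (n - k + 1)) ((\<beta>/2) * real (k - 1))) / ((\<beta>/2) * real n)
       - gG (real k / real n) \<theta>\<bar> \<le> \<epsilon>"
      by (simp add: A1_def A3_def B_def l_def t_def b'_def)
  qed
qed




lemma indicator_floor:
  fixes n :: nat and k :: nat and t :: real
  assumes n: "n > 0"
  shows "indicator {real k / real n..<(real k + 1) / real n} t = (if \<lfloor>real n * t\<rfloor> = int k then 1 else (0::real))"
proof -
  have np: "real n > 0" using n by simp
  have "t \<in> {real k / real n..<(real k + 1) / real n} \<longleftrightarrow> real k \<le> real n * t \<and> real n * t < real k + 1"
    using np by (auto simp: field_simps)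
  also have "\<dots> \<longleftrightarrow> \<lfloor>real n * t\<rfloor> = int k" by (simp add: floor_eq_iff)
  finally show ?thesis by (simp add: indicator_def)
qed

lemma nat_range_aux: "0 \<le> (j::int) \<Longrightarrow> (nat j \<in> {2..m}) = (2 \<le> j \<and> j \<le> int m)"
  by auto

lemma psi_closed:
  fixes n m :: nat and h :: "real \<Rightarrow> real" and t :: real
  assumes n: "n > 0"
  shows "(\<Sum>k=2..m. h (real k / real n) * indicator {real k / real n..<(real k + 1) / real n} t)
       = (if 2 \<le> \<lfloor>real n * t\<rfloor> \<and> \<lfloor>real n * t\<rfloor> \<le> int m then h (real_of_int \<lfloor>real n * t\<rfloor> / real n) else 0)"
proof -
  have "(\<Sum>k=2..m. h (real k / real n) * indicator {real k / real n..<(real k + 1) / real n} t)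
      = (\<Sum>k\<in>{2..m}. if k = nat \<lfloor>real n * t\<rfloor> \<and> \<lfloor>real n * t\<rfloor> \<ge> 0 then h (real k / real n) else 0)"
  proof (intro sum.cong refl)
    fix k assume "k \<in> {2..m}"
    show "h (real k / real n) * indicator {real k / real n..<(real k + 1) / real n} t =
      (if k = nat \<lfloor>real n * t\<rfloor> \<and> \<lfloor>real n * t\<rfloor> \<ge> 0 then h (real k / real n) else 0)"
    proof (cases "\<lfloor>real n * t\<rfloor> = int k")
      case True
      then have "\<lfloor>real n * t\<rfloor> \<ge> 0" "k = nat \<lfloor>real n * t\<rfloor>" by simp_all
      then have c2: "(k = nat \<lfloor>real n * t\<rfloor> \<and> \<lfloor>real n * t\<rfloor> \<ge> 0) = True" by simp
      have c1: "(\<lfloor>real n * t\<rfloor> = int k) = True" using True by simp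
      show ?thesis unfolding indicator_floor[OF n] by (simp only: c1 c2 if_True mult_1_right)
    next
      case False
      then have "\<not> (k = nat \<lfloor>real n * t\<rfloor> \<and> \<lfloor>real n * t\<rfloor> \<ge> 0)" by auto
      then have c2: "(k = nat \<lfloor>real n * t\<rfloor> \<and> \<lfloor>real n * t\<rfloor> \<ge> 0) = False" by simp
      have c1: "(\<lfloor>real n * t\<rfloor> = int k) = False" using False by simp
      show ?thesis unfolding indicator_floor[OF n] by (simp only: c1 c2 if_False mult_0_right)
    qed
  qed
  also have "\<dots> = (if 2 \<le> \<lfloor>real n * t\<rfloor> \<and> \<lfloor>real n * t\<rfloor> \<le> int m then h (real_of_int \<lfloor>real n * t\<rfloor> / real n) else 0)"
  proof (cases "\<lfloor>real n * t\<rfloor> \<ge> 0")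
    case True
    then have "(\<Sum>k\<in>{2..m}. if k = nat \<lfloor>real n * t\<rfloor> \<and> \<lfloor>real n * t\<rfloor> \<ge> 0 then h (real k / real n) else 0)
       = (\<Sum>k\<in>{2..m}. if k = nat \<lfloor>real n * t\<rfloor> then h (real k / real n) else 0)" by simp
    also have "\<dots> = (if nat \<lfloor>real n * t\<rfloor> \<in> {2..m} then h (real (nat \<lfloor>real n * t\<rfloor>) / real n) else 0)"
      by (simp add: sum.delta')
    also have "\<dots> = (if 2 \<le> \<lfloor>real n * t\<rfloor> \<and> \<lfloor>real n * t\<rfloor> \<le> int m then h (real_of_int \<lfloor>real n * t\<rfloor> / real n) else 0)"
      using nat_range_aux[OF True, of m] True by (simp only: of_nat_nat)
    finally show ?thesis .
  next
    case False
    then show ?thesis by auto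
  qed
  finally show ?thesis .
qed

lemma riemann:
  fixes h :: "real \<Rightarrow> real" and T Mh :: real
  assumes Tp: "T > 0"
    and bound: "\<And>t. t \<in> {0<..T} \<Longrightarrow> \<bar>h t\<bar> \<le> Mh"
    and lc: "\<And>t. t \<in> {0<..T} \<Longrightarrow> (h \<longlongrightarrow> h t) (at_left t)"
  shows "(\<lambda>n::nat. \<Sum>k=2..nat \<lfloor>real n * T\<rfloor>. h (real k / real n) / real n) \<longlonglongrightarrow> integral {0..T} h"
proof -
  define m where "m n = nat \<lfloor>real n * T\<rfloor>" for n :: nat
  define \<psi> where "\<psi> n t = (\<Sum>k=2..m n. h (real k / real n) * indicator {real k / real n..<(real k + 1) / real n} t)"
    for n :: nat and t :: real
  define f where "f t = indicator {0<..T} t * h t" for t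
  have Mh: "Mh \<ge> 0" using bound[of T] Tp by auto
  have mle: "real_of_int \<lfloor>real n * T\<rfloor> \<le> real n * T" for n by linarith
  have mint: "int (m n) = \<lfloor>real n * T\<rfloor>" for n using Tp by (simp add: m_def)
  have psim[measurable]: "\<psi> n \<in> borel_measurable borel" for n
    unfolding \<psi>_def[abs_def] by measurable
  have closed: "\<psi> n t = (if 2 \<le> \<lfloor>real n * t\<rfloor> \<and> \<lfloor>real n * t\<rfloor> \<le> int (m n) then h (real_of_int \<lfloor>real n * t\<rfloor> / real n) else 0)"
    for n t
  proof (cases "n = 0")
    case True
    then show ?thesis by (simp add: \<psi>_def m_def)
  next
    case False
    then show ?thesis unfolding \<psi>_def by (intro psi_closed) auto
  qed
  have inrange: "real_of_int \<lfloor>real n * t\<rfloor> / real n \<in> {0<..T} \<and> t \<in> {0..T+1}"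
    if "2 \<le> \<lfloor>real n * t\<rfloor>" "\<lfloor>real n * t\<rfloor> \<le> int (m n)" for n t
  proof -
    have n0: "n \<noteq> 0"
    proof
      assume "n = 0" then show False using that(1) by simp
    qed
    then have np: "real n > 0" by simp
    have f1: "real_of_int \<lfloor>real n * t\<rfloor> \<le> real n * t" "real n * t < real_of_int \<lfloor>real n * t\<rfloor> + 1" by linarith+
    have f2: "real_of_int \<lfloor>real n * t\<rfloor> \<le> real n * T" using that(2) mint[of n] mle[of n] by linarith
    have g2: "real_of_int \<lfloor>real n * t\<rfloor> \<ge> 2" using that(1) by linarith
    have a: "real_of_int \<lfloor>real n * t\<rfloor> / real n > 0" using g2 np by simp
    have b: "real_of_int \<lfloor>real n * t\<rfloor> / real n \<le> T" using f2 np by (simp add: divide_le_eq mult.commute)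
    have c: "t \<ge> 0" using f1 g2 np by (smt (verit) mult_nonneg_nonneg zero_le_mult_iff)
    have "real n * t < real n * T + 1" using f1 f2 by linarith
    then have "t < T + 1 / real n" using np by (simp add: field_simps)
    moreover have "1 / real n \<le> 1" using n0 by simp
    ultimately have d: "t \<le> T + 1" by linarith
    show ?thesis using a b c d by auto
  qed
  have dom: "\<bar>\<psi> n t\<bar> \<le> Mh * indicator {0..T+1} t" for n t
    using inrange[of n t] bound Mh unfolding closed by (auto simp: indicator_def)
  have conv: "(\<lambda>n. \<psi> n t) \<longlonglongrightarrow> f t" for t
  proof (cases "t \<le> 0")
    case True
    have "\<psi> n t = 0" for n
    proof -
      have "real n * t \<le> 0" using True by (simp add: mult_nonneg_nonpos)
      then have "\<lfloor>real n * t\<rfloor> \<le> 0" by linarith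
      then show ?thesis unfolding closed by auto
    qed
    then show ?thesis using True by (simp add: f_def)
  next
    case False
    then have tp: "t > 0" by simp
    show ?thesis
    proof (cases "t > T")
      case True
      obtain N :: nat where N: "1 / (t - T) < real N" using reals_Archimedean2 by blast
      have "\<psi> n t = 0" if "n \<ge> N" for n
      proof -
        have "real N \<le> real n" using that by simp
        then have "1 / (t - T) < real n" using N by linarith
        then have "1 < real n * (t - T)" using True by (simp add: field_simps)
        then have "real n * T + 1 < real n * t" by (simp add: algebra_simps)
        then have "\<lfloor>real n * t\<rfloor> > \<lfloor>real n * T\<rfloor>" using mle[of n] by linarith
        then show ?thesis unfolding closed mint by auto
      qed
      then have "eventually (\<lambda>n. \<psi> n t = 0) sequentially" unfolding eventually_sequentially by blast
      then show ?thesis using True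
        by (simp add: f_def tendsto_eventually)
    next
      case False
      then have tT: "t \<in> {0<..T}" using tp by simp
      show ?thesis
      proof (rule tendstoI)
        fix e :: real assume e: "e > 0"
        have "eventually (\<lambda>s. dist (h s) (h t) < e) (at_left t)" using lc[OF tT] e by (rule tendstoD)
        then obtain b where b: "b < t" and bP: "\<And>y. y > b \<Longrightarrow> y < t \<Longrightarrow> dist (h y) (h t) < e"
          unfolding eventually_at_left_field by blast
        obtain N :: nat where N: "max (2 / t) (1 / (t - b)) < real N" using reals_Archimedean2 by blast
        have "dist (\<psi> n t) (f t) < e" if "n \<ge> N" for n
        proof -
          have "real N \<le> real n" using that by simp
          then have n1: "2 / t < real n" "1 / (t - b) < real n" using N by linarith+
          have np: "real n > 0" using n1 tp by (smt (verit) divide_pos_pos)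
          have nt2: "real n * t > 2" using n1(1) tp by (simp add: field_simps)
          have ntb: "real n * (t - b) > 1" using n1(2) b by (simp add: field_simps)
          have f1: "real_of_int \<lfloor>real n * t\<rfloor> \<le> real n * t" "real n * t < real_of_int \<lfloor>real n * t\<rfloor> + 1" by linarith+
          have c1: "2 \<le> \<lfloor>real n * t\<rfloor>" using nt2 by linarith
          have "real n * t \<le> real n * T" using tT np by (simp add: mult_left_mono)
          then have c2: "\<lfloor>real n * t\<rfloor> \<le> int (m n)" unfolding mint by (intro floor_mono)
          define s where "s = real_of_int \<lfloor>real n * t\<rfloor> / real n"
          have "\<psi> n t = h s" unfolding closed s_def using c1 c2 by simp
          moreover have "s \<le> t" using f1 np by (simp add: s_def divide_le_eq mult.commute)
          moreover have "s > b"
          proof -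
            have "real n * b < real n * t - 1" using ntb by (simp add: algebra_simps)
            also have "\<dots> < real_of_int \<lfloor>real n * t\<rfloor>" using f1 by linarith
            finally show ?thesis using np by (simp add: s_def field_simps)
          qed
          ultimately show ?thesis using bP[of s] e tT by (cases "s = t") (auto simp: f_def)
        qed
        then show "eventually (\<lambda>n. dist (\<psi> n t) (f t) < e) sequentially"
          unfolding eventually_sequentially by blast
      qed
    qed
  qed
  have fm: "f \<in> borel_measurable borel"
    by (rule borel_measurable_LIMSEQ_real[OF conv]) auto
  have wint: "integrable lborel (\<lambda>t. Mh * indicator {0..T+1} t)"
    by (intro integrable_mult_right) (use Tp in \<open>simp add: integrable_indicator_iff\<close>)
  have lim: "(\<lambda>n. integral\<^sup>L lborel (\<psi> n)) \<longlonglongrightarrow> integral\<^sup>L lborel f"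
    by (rule integral_dominated_convergence[OF _ _ wint]) (use fm conv dom in auto)
  have intpsi: "integral\<^sup>L lborel (\<psi> n) = (\<Sum>k=2..m n. h (real k / real n) / real n)" for n
  proof (cases "n = 0")
    case True
    have "\<psi> 0 = (\<lambda>t. 0)" by (simp add: \<psi>_def m_def fun_eq_iff)
    then show ?thesis using True by (simp add: m_def)
  next
    case False
    then have np: "real n > 0" by simp
    have "integral\<^sup>L lborel (\<psi> n) = (\<Sum>k=2..m n. integral\<^sup>L lborel (\<lambda>t. h (real k / real n) * indicator {real k / real n..<(real k + 1) / real n} t))"
      unfolding \<psi>_def
      by (rule Bochner_Integration.integral_sum[where f="\<lambda>k t. h (real k / real n) * indicator {real k / real n..<(real k + 1) / real n} t"])
        (use np in \<open>auto intro!: integrable_mult_right simp: integrable_indicator_iff divide_right_mono\<close>)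
    also have "\<dots> = (\<Sum>k=2..m n. h (real k / real n) / real n)"
    proof (intro sum.cong refl)
      fix k
      have le: "real k / real n \<le> (real k + 1) / real n" using np by (simp add: divide_right_mono)
      have "(real k + 1) / real n - real k / real n = 1 / real n" using np by (simp add: field_simps)
      then have "measure lborel {real k / real n..<(real k + 1) / real n} = 1 / real n"
        using le np by (simp add: measure_def)
      then show "integral\<^sup>L lborel (\<lambda>t. h (real k / real n) * indicator {real k / real n..<(real k + 1) / real n} t) = h (real k / real n) / real n"
        by simp
    qed
    finally show ?thesis .
  qed
  have fint: "integrable lborel f"
    by (rule Bochner_Integration.integrable_bound[OF wint]) (use fm bound Mh in \<open>auto simp: f_def indicator_def\<close>)
  have si: "set_integrable lborel {0<..T} h"
    using fint unfolding set_integrable_def f_def by simp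
  have "integral\<^sup>L lborel f = (LINT x:{0<..T}|lborel. h x)"
    by (simp add: set_lebesgue_integral_def f_def[abs_def])
  also have "\<dots> = integral {0<..T} h" by (rule set_borel_integral_eq_integral(2)[OF si])
  also have "\<dots> = integral {0..T} h"
    by (rule integral_spike_set [OF empty_imp_negligible negligible_subset [OF negligible_sing [of 0]]]) auto
  finally show ?thesis using lim unfolding intpsi m_def by simp
qed




theorem lemma6p1:
  fixes \<beta> T :: real and \<phi> :: "real \<Rightarrow> real"
  assumes "\<beta> > 0" and "0 < T" and "T < 1"
    and "\<forall>t\<in>{0<..T}. continuous (at_left t) \<phi>"
    and "bounded_variation_on \<phi> 0 T"
    and "\<forall>t\<in>{0<..T}. \<phi> t + 1 - t > 0"
  shows "(\<lambda>n. 1 / ((\<beta>/2) * (real n)\<^sup>2) *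
            ln (\<integral>\<omega>. exp ((\<beta>/2) * real n *
                  (\<Sum>k = 1..nat \<lfloor>real n * T\<rfloor>. \<phi> (real k / real n) * ln (rhoG k \<omega>)))
                \<partial>rhoG_space \<beta> n))
         \<longlonglongrightarrow> integral {0..T} (\<lambda>t. gG t (\<phi> t))"
proof -
  note bp = assms(1) and Tp = assms(2) and T1 = assms(3) and lcont = assms(4) and bv = assms(5)
    and ppos = assms(6)
  define b' where "b' = \<beta>/2"
  have b'p: "b' > 0" using bp by (simp add: b'_def)
  define m where "m n = nat \<lfloor>real n * T\<rfloor>" for n :: nat
  define h where "h t = gG t (\<phi> t)" for t
  obtain B where B: "\<And>(k::nat) (s::nat \<Rightarrow> real). 0 \<le> s 0 \<and> s k \<le> T \<and> (\<forall>i<k. s i \<le> s (Suc i)) \<Longrightarrow>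
        (\<Sum>i<k. \<bar>\<phi> (s (Suc i)) - \<phi> (s i)\<bar>) \<le> B"
    using bv unfolding bounded_variation_on_def by blast
  define M where "M = \<bar>\<phi> T\<bar> + B"
  have phiM: "\<bar>\<phi> t\<bar> \<le> M" if "t \<in> {0..T}" for t
  proof -
    have "(\<Sum>i<1. \<bar>\<phi> ((\<lambda>i. if i = 0 then t else T) (Suc i)) - \<phi> ((\<lambda>i. if i = 0 then t else T) i)\<bar>) \<le> B"
      by (rule B) (use that in auto)
    then have "\<bar>\<phi> T - \<phi> t\<bar> \<le> B" by simp
    then show ?thesis unfolding M_def by linarith
  qed
  have M0: "M \<ge> 0" using phiM[of T] Tp by (smt (verit) atLeastAtMost_iff)
  obtain KJ where KJ: "\<And>u. u \<in> {-(M+2)..M+2} \<Longrightarrow> \<bar>Jfun u\<bar> \<le> KJ"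
  proof -
    have "compact (Jfun ` {-(M+2)..M+2})"
      by (intro compact_continuous_image continuous_at_imp_continuous_on compact_Icc) (auto intro: Jfun_cont)
    then have "bounded (Jfun ` {-(M+2)..M+2})" by (rule compact_imp_bounded)
    then obtain a where a: "\<forall>x\<in>{-(M+2)..M+2}. \<bar>Jfun x\<bar> \<le> a" unfolding bounded_iff by auto
    show ?thesis by (rule that[of a]) (use a in blast)
  qed
  have hbound: "\<bar>h t\<bar> \<le> 3 * KJ" if "t \<in> {0<..T}" for t
  proof -
    have "\<bar>\<phi> t\<bar> \<le> M" using phiM that by auto
    then have "\<bar>Jfun (1 - t + \<phi> t)\<bar> \<le> KJ" "\<bar>Jfun (1 - t)\<bar> \<le> KJ" "\<bar>Jfun (1 + \<phi> t)\<bar> \<le> KJ"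
      using that T1 M0 by (auto intro!: KJ)
    then show ?thesis unfolding h_def gG_def by linarith
  qed
  have hlc: "(h \<longlongrightarrow> h t) (at_left t)" if "t \<in> {0<..T}" for t
  proof -
    have "(\<phi> \<longlongrightarrow> \<phi> t) (at_left t)" using lcont that by (simp add: continuous_within)
    then show ?thesis unfolding h_def[abs_def] gG_def
      by (intro tendsto_intros isCont_tendsto_compose[OF Jfun_cont] tendsto_ident_at)
  qed
  have riem: "(\<lambda>n::nat. \<Sum>k=2..m n. h (real k / real n) / real n) \<longlonglongrightarrow> integral {0..T} h"
    unfolding m_def by (rule riemann[OF Tp hbound hlc])
  define Q where "Q n k = Beta ((\<beta>/2) * real (n - k + 1) + (\<beta>/2) * real n * \<phi> (real k / real n)) ((\<beta>/2) * real (k - 1))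
                     / Beta ((\<beta>/2) * real (n - k + 1)) ((\<beta>/2) * real (k - 1))" for n k :: nat
  define L where "L n = 1 / ((\<beta>/2) * (real n)\<^sup>2) *
            ln (\<integral>\<omega>. exp ((\<beta>/2) * real n *
                  (\<Sum>k = 1..nat \<lfloor>real n * T\<rfloor>. \<phi> (real k / real n) * ln (rhoG k \<omega>)))
                \<partial>rhoG_space \<beta> n)" for n :: nat
  have mle: "real (m n) \<le> real n * T" for n using Tp by (simp add: m_def)
  have mn: "m n < n" if "n \<ge> 1" for n
  proof -
    have "real n * T < real n" using that T1 by simp
    then show ?thesis using mle[of n] by linarith
  qed
  have kin: "real k / real n \<in> {0<..T}" if "k \<in> {1..m n}" "n \<ge> 1" for k n
  proof -
    have "real k \<le> real n * T" using that mle[of n] by auto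
    then show ?thesis using that by (auto simp: divide_le_eq mult.commute)
  qed
  have Lform: "L n = (\<Sum>k\<in>{2..m n}. ln (Q n k) / ((\<beta>/2) * real n)) / real n" if n1: "n \<ge> 1" for n
  proof -
    define c where "c k = (\<beta>/2) * real n * \<phi> (real k / real n)" for k
    have np: "real n > 0" using n1 by simp
    have sum_eq: "(\<beta>/2) * real n * (\<Sum>k = 1..m n. \<phi> (real k / real n) * ln (rhoG k \<omega>))
        = (\<Sum>k=2..m n. c k * ln (\<omega> k))" for \<omega> :: "nat \<Rightarrow> real"
    proof -
      have "(\<beta>/2) * real n * (\<Sum>k = 1..m n. \<phi> (real k / real n) * ln (rhoG k \<omega>))
          = (\<Sum>k = 1..m n. c k * ln (rhoG k \<omega>))"
        by (simp add: sum_distrib_left c_def mult.assoc)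
      also have "\<dots> = (\<Sum>k=2..m n. c k * ln (\<omega> k))"
        by (rule sum.mono_neutral_cong_right) (auto simp: rhoG_def)
      finally show ?thesis .
    qed
    have cpos: "(\<beta>/2) * real (n - k + 1) + c k > 0" if "k \<in> {2..m n}" for k
    proof -
      have k: "k \<in> {1..m n}" using that by auto
      have p: "\<phi> (real k / real n) + 1 - real k / real n > 0" using ppos kin[OF k n1] by blast
      have kn: "k < n" using that mn[OF n1] by auto
      have "real n * (\<phi> (real k / real n) + 1 - real k / real n) > 0" using p np by simp
      then have "real n * \<phi> (real k / real n) + real n - real k > 0" using np by (simp add: algebra_simps)
      then have "real (n - k + 1) + real n * \<phi> (real k / real n) > 0" using kn by (simp add: of_nat_diff)
      then have "(\<beta>/2) * (real (n - k + 1) + real n * \<phi> (real k / real n)) > 0" using bp by simp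
      then show ?thesis by (simp add: c_def algebra_simps)
    qed
    have E: "(\<integral>\<omega>. exp ((\<beta>/2) * real n * (\<Sum>k = 1..m n. \<phi> (real k / real n) * ln (rhoG k \<omega>))) \<partial>rhoG_space \<beta> n)
       = (\<Prod>k\<in>{2..m n}. Q n k)"
      unfolding sum_eq Q_def c_def[symmetric]
      by (rule expect_formula[OF bp mn[OF n1]]) (use cpos in auto)
    have Qpos: "Q n k > 0" if "k \<in> {2..m n}" for k
    proof -
      have kn: "k < n" using that mn[OF n1] by auto
      have a1: "(\<beta>/2) * real (n - k + 1) + c k > 0" by (rule cpos[OF that])
      have a2: "(\<beta>/2) * real (n - k + 1) > 0" and a3: "(\<beta>/2) * real (k - 1) > 0" using bp that kn by auto
      have "Q n k = Beta ((\<beta>/2) * real (n - k + 1) + c k) ((\<beta>/2) * real (k - 1)) / Beta ((\<beta>/2) * real (n - k + 1)) ((\<beta>/2) * real (k - 1))"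
        unfolding Q_def c_def ..
      then show ?thesis using Beta_pos[OF a1 a3] Beta_pos[OF a2 a3] by (simp only: divide_pos_pos)
    qed
    have "ln (\<Prod>k\<in>{2..m n}. Q n k) = (\<Sum>k\<in>{2..m n}. ln (Q n k))"
      by (rule ln_prod) (use Qpos in force)+
    then have "L n = 1 / ((\<beta>/2) * (real n)\<^sup>2) * (\<Sum>k\<in>{2..m n}. ln (Q n k))"
      unfolding L_def using E by (simp add: m_def)
    also have "\<dots> = (\<Sum>k\<in>{2..m n}. ln (Q n k) / ((\<beta>/2) * real n)) / real n"
      using np bp by (simp add: sum_divide_distrib[symmetric] power2_eq_square field_simps sum_distrib_left)
    finally show ?thesis .
  qed
  have diff: "(\<lambda>n. L n - (\<Sum>k=2..m n. h (real k / real n) / real n)) \<longlonglongrightarrow> 0"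
  proof (rule tendstoI)
    fix e :: real assume e: "e > 0"
    obtain N where N: "\<And>n k \<theta>. n \<ge> N \<Longrightarrow> 2 \<le> k \<Longrightarrow> k < n \<Longrightarrow> \<bar>\<theta>\<bar> \<le> M \<Longrightarrow> 1 - real k / real n + \<theta> > 0 \<Longrightarrow>
     \<bar>ln (Beta ((\<beta>/2) * real (n - k + 1) + (\<beta>/2) * real n * \<theta>) ((\<beta>/2) * real (k - 1))
          / Beta ((\<beta>/2) * real (n - k + 1)) ((\<beta>/2) * real (k - 1))) / ((\<beta>/2) * real n)
       - gG (real k / real n) \<theta>\<bar> \<le> e/2"
      using term_est[OF bp M0, of "e/2"] e by auto
    have "dist (L n - (\<Sum>k=2..m n. h (real k / real n) / real n)) 0 < e" if n: "n \<ge> max N 1" for n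
    proof -
      have n1: "n \<ge> 1" and nN: "n \<ge> N" using n by auto
      have np: "real n > 0" using n1 by simp
      have each: "\<bar>ln (Q n k) / ((\<beta>/2) * real n) - h (real k / real n)\<bar> \<le> e/2" if k: "k \<in> {2..m n}" for k
      proof -
        have k1: "k \<in> {1..m n}" using k by auto
        have kn: "k < n" using k mn[OF n1] by auto
        have "real k / real n \<in> {0..T}" using kin[OF k1 n1] by auto
        then have th: "\<bar>\<phi> (real k / real n)\<bar> \<le> M" by (rule phiM)
        have p: "1 - real k / real n + \<phi> (real k / real n) > 0" using ppos kin[OF k1 n1] by force
        show ?thesis using N[OF nN _ kn th p] k unfolding Q_def h_def by auto
      qed
      have "L n - (\<Sum>k=2..m n. h (real k / real n) / real n)
          = (\<Sum>k\<in>{2..m n}. ln (Q n k) / ((\<beta>/2) * real n) - h (real k / real n)) / real n"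
        unfolding Lform[OF n1] by (simp add: sum_divide_distrib[symmetric] sum_subtractf diff_divide_distrib)
      then have "\<bar>L n - (\<Sum>k=2..m n. h (real k / real n) / real n)\<bar>
          = \<bar>\<Sum>k\<in>{2..m n}. ln (Q n k) / ((\<beta>/2) * real n) - h (real k / real n)\<bar> / real n"
        using np by simp
      also have "\<dots> \<le> (\<Sum>k\<in>{2..m n}. \<bar>ln (Q n k) / ((\<beta>/2) * real n) - h (real k / real n)\<bar>) / real n"
        using np by (intro divide_right_mono sum_abs) auto
      also have "\<dots> \<le> (\<Sum>k\<in>{2..m n}. e/2) / real n"
        using np each by (intro divide_right_mono sum_mono) auto
      also have "\<dots> = real (card {2..m n}) * (e/2) / real n" by simp
      also have "\<dots> \<le> real n * (e/2) / real n"
      proof -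
        have "card {2..m n} \<le> n" using mn[OF n1] by simp
        then show ?thesis using np e by (intro divide_right_mono mult_right_mono) auto
      qed
      also have "\<dots> = e/2" using np by simp
      finally show ?thesis using e by (simp add: dist_real_def)
    qed
    then show "eventually (\<lambda>n. dist (L n - (\<Sum>k=2..m n. h (real k / real n) / real n)) 0 < e) sequentially"
      unfolding eventually_sequentially by blast
  qed
  have "(\<lambda>n. (\<Sum>k=2..m n. h (real k / real n) / real n) + (L n - (\<Sum>k=2..m n. h (real k / real n) / real n)))
      \<longlonglongrightarrow> integral {0..T} h + 0"
    by (rule tendsto_add[OF riem diff])
  then have "L \<longlonglongrightarrow> integral {0..T} h" by simp
  then show ?thesis unfolding L_def h_def by simp
qed


end
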